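(* An LR triple is uniquely determined up to isomorphism by its parameter array and trace data. That is, if $A,B,C$ on $V$ and $A',B',C'$ on $V'$ are LR triples over $\mathbb F$ of the same diameter with the same parameter array and the same trace data, then they are isomorphic.
   Context: Let $V$ be a vector space over a field $\mathbb F$ with $\dim V=d+1$. A decomposition of $V$ is a sequence $(V_i)_{i=0}^d$ of one-dimensional subspaces with $V=\bigoplus V_i$; $X$ lowers it if $XV_i=V_{i-1}$ ($1\le i\le d$), $XV_0=0$; raises it if $XV_i=V_{i+1}$ ($0\le i\le d-1$), $XV_d=0$. An ordered pair $X,Y\in\mathrm{End}(V)$ is an LR pair if some decomposition (unique, the $(X,Y)$-decomposition) is lowered by $X$ and raised by $Y$; for $1\le i\le d$ the $i$-th component is invariant under $YX$ with nonzero eigenvalue, giving the parameter sequence. An LR triple on $V$ is $A,B,C\in\mathrm{End}(V)$ with $A,B$; $B,C$; $C,A$ all LR pairs. Its parameter array is $(\{\varphi_i\};\{\varphi'_i\};\{\varphi''_i\})$, the parameter sequences of $A,B$; $B,C$; $C,A$. Let $E_i,E'_i,E''_i$ ($0\le i\le d$) be the projections onto the $i$-th components of the $(A,B)$-, $(B,C)$-, $(C,A)$-decompositions respectively (along the other components). The trace data is $(\{a_i\};\{a'_i\};\{a''_i\})$ with $a_i=\mathrm{tr}(CE_i)$, $a'_i=\mathrm{tr}(AE'_i)$, $a''_i=\mathrm{tr}(BE''_i)$. LR triples are isomorphic if some linear bijection $\sigma:V\to V'$ satisfies $\sigma A=A'\sigma$, $\sigma B=B'\sigma$, $\sigma C=C'\sigma$.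 *)

theory Defs
  imports "Jordan_Normal_Form.Matrix"
begin

text \<open>The space V of dimension n = d+1 is represented by column vectors of length n over the
 field 'a; endomorphisms of V are n x n matrices.\<close>

definition mat_trace :: "'a::comm_ring_1 mat \<Rightarrow> 'a" where
  "mat_trace M = (\<Sum>i<dim_row M. M $$ (i, i))"

text \<open>A decomposition: a list of n one-dimensional subspaces whose direct sum is the whole
 space, i.e. V_i is spanned by the i-th vector of some basis (columns of an invertible P).\<close>
definition decomposition :: "nat \<Rightarrow> 'a::field vec set list \<Rightarrow> bool" where
  "decomposition n Vs \<longleftrightarrow> length Vs = n \<and>
     (\<exists>P \<in> carrier_mat n n. invertible_mat P \<and>
        (\<forall>i<n. Vs ! i = {c \<cdot>\<^sub>v col P i | c. True}))"

definition lowers :: "nat \<Rightarrow> 'a::field mat \<Rightarrow> 'a vec set list \<Rightarrow> bool" where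
  "lowers n X Vs \<longleftrightarrow>
     (\<forall>i. 1 \<le> i \<and> i < n \<longrightarrow> (\<lambda>x. X *\<^sub>v x) ` (Vs ! i) = Vs ! (i - 1)) \<and>
     (\<lambda>x. X *\<^sub>v x) ` (Vs ! 0) = {0\<^sub>v n}"

definition raises :: "nat \<Rightarrow> 'a::field mat \<Rightarrow> 'a vec set list \<Rightarrow> bool" where
  "raises n Y Vs \<longleftrightarrow>
     (\<forall>i. i + 1 < n \<longrightarrow> (\<lambda>x. Y *\<^sub>v x) ` (Vs ! i) = Vs ! (i + 1)) \<and>
     (\<lambda>x. Y *\<^sub>v x) ` (Vs ! (n - 1)) = {0\<^sub>v n}"

definition LR_pair :: "nat \<Rightarrow> 'a::field mat \<Rightarrow> 'a mat \<Rightarrow> bool" where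
  "LR_pair n X Y \<longleftrightarrow> X \<in> carrier_mat n n \<and> Y \<in> carrier_mat n n \<and>
     (\<exists>Vs. decomposition n Vs \<and> lowers n X Vs \<and> raises n Y Vs)"

text \<open>The (X,Y)-decomposition (unique when X,Y is an LR pair).\<close>
definition LR_dec :: "nat \<Rightarrow> 'a::field mat \<Rightarrow> 'a mat \<Rightarrow> 'a vec set list" where
  "LR_dec n X Y = (THE Vs. decomposition n Vs \<and> lowers n X Vs \<and> raises n Y Vs)"

text \<open>Parameter sequence: phi_i is the eigenvalue of YX on the i-th component (1 <= i <= d).\<close>
definition param_seq :: "nat \<Rightarrow> 'a::field mat \<Rightarrow> 'a mat \<Rightarrow> nat \<Rightarrow> 'a" where
  "param_seq n X Y i = (THE c. \<forall>x \<in> LR_dec n X Y ! i. (Y * X) *\<^sub>v x = c \<cdot>\<^sub>v x)"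

definition proj_comp :: "nat \<Rightarrow> 'a::field vec set list \<Rightarrow> nat \<Rightarrow> 'a mat" where
  "proj_comp n Vs i = (THE E. E \<in> carrier_mat n n \<and>
     (\<forall>j<n. \<forall>x \<in> Vs ! j. E *\<^sub>v x = (if j = i then x else 0\<^sub>v n)))"

definition LR_triple :: "nat \<Rightarrow> 'a::field mat \<Rightarrow> 'a mat \<Rightarrow> 'a mat \<Rightarrow> bool" where
  "LR_triple n A B C \<longleftrightarrow> LR_pair n A B \<and> LR_pair n B C \<and> LR_pair n C A"

definition trace_a :: "nat \<Rightarrow> 'a::field mat \<Rightarrow> 'a mat \<Rightarrow> 'a mat \<Rightarrow> nat \<Rightarrow> 'a" where
  "trace_a n A B C i = mat_trace (C * proj_comp n (LR_dec n A B) i)"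

definition trace_a' :: "nat \<Rightarrow> 'a::field mat \<Rightarrow> 'a mat \<Rightarrow> 'a mat \<Rightarrow> nat \<Rightarrow> 'a" where
  "trace_a' n A B C i = mat_trace (A * proj_comp n (LR_dec n B C) i)"

definition trace_a'' :: "nat \<Rightarrow> 'a::field mat \<Rightarrow> 'a mat \<Rightarrow> 'a mat \<Rightarrow> nat \<Rightarrow> 'a" where
  "trace_a'' n A B C i = mat_trace (B * proj_comp n (LR_dec n C A) i)"

definition LR_triple_iso :: "nat \<Rightarrow> 'a::field mat \<Rightarrow> 'a mat \<Rightarrow> 'a mat \<Rightarrow>
    'a mat \<Rightarrow> 'a mat \<Rightarrow> 'a mat \<Rightarrow> bool" where
  "LR_triple_iso n A B C A' B' C' \<longleftrightarrow>
     (\<exists>S \<in> carrier_mat n n. invertible_mat S \<and>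
        S * A = A' * S \<and> S * B = B' * S \<and> S * C = C' * S)"

end

theory Submission
  imports Defs
begin

definition line :: "'a::field vec \<Rightarrow> 'a vec set" where
  "line v = {c \<cdot>\<^sub>v v | c. True}"

definition lowM :: "nat \<Rightarrow> (nat \<Rightarrow> 'a::field) \<Rightarrow> 'a mat" where
  "lowM n f = mat n n (\<lambda>(i,j). if j = Suc i then f j else 0)"

definition raiseM :: "nat \<Rightarrow> 'a::field mat" where
  "raiseM n = mat n n (\<lambda>(i,j). if i = Suc j then 1 else 0)"

lemma lowM_carrier[simp]: "lowM n f \<in> carrier_mat n n" by (simp add: lowM_def)
lemma raiseM_carrier[simp]: "raiseM n \<in> carrier_mat n n" by (simp add: raiseM_def)

lemma sum_single_nz:
  assumes "k < (n::nat)" "\<And>j. j < n \<Longrightarrow> j \<noteq> k \<Longrightarrow> g j = 0"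
  shows "(\<Sum>j\<in>{0..<n}. g j) = (g k :: 'a::comm_monoid_add)"
proof -
  have "(\<Sum>j\<in>{0..<n}. g j) = g k + (\<Sum>j\<in>{0..<n} - {k}. g j)"
    by (rule sum.remove) (use assms in auto)
  also have "(\<Sum>j\<in>{0..<n} - {k}. g j) = 0" by (rule sum.neutral, insert assms, auto)
  finally show ?thesis by simp
qed

lemma lowM_mult_vec:
  assumes "v \<in> carrier_vec n"
  shows "lowM n f *\<^sub>v v = vec n (\<lambda>i. if Suc i < n then f (Suc i) * v $ Suc i else 0)"
proof (rule eq_vecI)
  fix i assume i: "i < dim_vec (vec n (\<lambda>i. if Suc i < n then f (Suc i) * v $ Suc i else 0))"
  hence i: "i < n" by simp
  have "(lowM n f *\<^sub>v v) $ i = (\<Sum>j\<in>{0..<n}. (if j = Suc i then f j else 0) * v $ j)"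
    using i assms by (simp add: lowM_def scalar_prod_def)
  also have "\<dots> = (if Suc i < n then f (Suc i) * v $ Suc i else 0)"
  proof (cases "Suc i < n")
    case True then show ?thesis by (subst sum_single_nz[of "Suc i"]) auto
  next
    case False then show ?thesis by (intro trans[OF sum.neutral]) auto
  qed
  finally show "(lowM n f *\<^sub>v v) $ i = vec n (\<lambda>i. if Suc i < n then f (Suc i) * v $ Suc i else 0) $ i"
    using i by simp
qed (simp add: lowM_def)

lemma raiseM_mult_vec:
  assumes "v \<in> carrier_vec n"
  shows "raiseM n *\<^sub>v v = vec n (\<lambda>i. if i = 0 then 0 else v $ (i - 1))"
proof (rule eq_vecI)
  fix i assume i: "i < dim_vec (vec n (\<lambda>i. if i = 0 then 0 else v $ (i - 1)))"
  hence i: "i < n" by simp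
  have "(raiseM n *\<^sub>v v) $ i = (\<Sum>j\<in>{0..<n}. (if i = Suc j then 1 else 0) * v $ j)"
    using i assms by (simp add: raiseM_def scalar_prod_def)
  also have "\<dots> = (if i = 0 then 0 else v $ (i - 1))"
  proof (cases "i = 0")
    case False then show ?thesis using i by (subst sum_single_nz[of "i - 1"]) auto
  next
    case True then show ?thesis by (intro trans[OF sum.neutral]) auto
  qed
  finally show "(raiseM n *\<^sub>v v) $ i = vec n (\<lambda>i. if i = 0 then 0 else v $ (i - 1)) $ i"
    using i by simp
qed (simp add: raiseM_def)

lemma mult_unit_vec:
  fixes M :: "'a::field mat"
  assumes "M \<in> carrier_mat r n" "k < n"
  shows "M *\<^sub>v unit_vec n k = col M k"
  using assms by (intro eq_vecI) (auto simp: carrier_matD)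

lemma col_lowM: "j < n \<Longrightarrow> col (lowM n f) j = (if j = 0 then 0\<^sub>v n else f j \<cdot>\<^sub>v unit_vec n (j - 1))"
  by (intro eq_vecI) (auto simp: lowM_def unit_vec_def)

lemma col_raiseM: "j < n \<Longrightarrow> col (raiseM n) j = (if Suc j < n then unit_vec n (Suc j) else 0\<^sub>v n)"
  by (intro eq_vecI) (auto simp: raiseM_def unit_vec_def)

lemma inv_of_invertible:
  assumes "P \<in> carrier_mat n n" "invertible_mat P"
  obtains Pi where "Pi \<in> carrier_mat n n" "P * Pi = 1\<^sub>m n" "Pi * P = 1\<^sub>m n"
proof -
  from assms obtain B where B: "P * B = 1\<^sub>m n" "B * P = 1\<^sub>m (dim_row B)"
    unfolding invertible_mat_def inverts_mat_def by auto
  have "dim_col B = n" using B(1) assms(1)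
    by (metis index_mult_mat(3) index_one_mat(3))
  moreover have "dim_row B = n" using B(2) assms(1)
    by (metis carrier_matD(2) index_mult_mat(3) index_one_mat(3))
  ultimately show ?thesis using that B by auto
qed

lemma mat_eq_cols:
  assumes "M \<in> carrier_mat r n" "N \<in> carrier_mat r n" "\<And>j. j < n \<Longrightarrow> col M j = col N j"
  shows "M = N"
proof (rule eq_matI)
  fix i j assume "i < dim_row N" "j < dim_col N"
  then show "M $$ (i, j) = N $$ (i, j)" using assms
    by (metis carrier_matD(1) carrier_matD(2) index_col)
qed (use assms in auto)

lemma smult_cancel:
  assumes "a \<cdot>\<^sub>v v = b \<cdot>\<^sub>v v" "v \<noteq> 0\<^sub>v (dim_vec v)"
  shows "a = (b::'a::field)"
proof -
  obtain k where k: "k < dim_vec v" "v $ k \<noteq> 0" using assms(2) by (metis eq_vecI index_zero_vec(1) index_zero_vec(2))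
  have "(a \<cdot>\<^sub>v v) $ k = (b \<cdot>\<^sub>v v) $ k" using assms(1) by simp
  then show ?thesis using k by simp
qed


lemma mult_zero_vec[simp]:
  fixes M :: "'a::field mat"
  shows "M \<in> carrier_mat r n \<Longrightarrow> M *\<^sub>v 0\<^sub>v n = 0\<^sub>v r"
  by (intro eq_vecI) (auto simp: carrier_matD)

lemma smult_zero_vec[simp]:
  "v \<in> carrier_vec n \<Longrightarrow> (0::'a::field) \<cdot>\<^sub>v v = 0\<^sub>v n"
  by (intro eq_vecI) auto

lemma smult_vec_zero'[simp]:
  "(a::'a::field) \<cdot>\<^sub>v 0\<^sub>v n = 0\<^sub>v n"
  by (intro eq_vecI) auto

lemma inv_cancel_vec:
  fixes P Pi :: "'a::field mat"
  assumes "P \<in> carrier_mat n n" "Pi \<in> carrier_mat n n" "Pi * P = 1\<^sub>m n" "w \<in> carrier_vec n"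
  shows "Pi *\<^sub>v (P *\<^sub>v w) = w"
proof -
  have "(Pi * P) *\<^sub>v w = Pi *\<^sub>v (P *\<^sub>v w)" by (rule assoc_mult_mat_vec[OF assms(2,1,4)])
  then show ?thesis using assms(3,4) by simp
qed

lemma inv_col_nz:
  fixes P Pi :: "'a::field mat"
  assumes "P \<in> carrier_mat n n" "Pi \<in> carrier_mat n n" "Pi * P = 1\<^sub>m n" "i < n"
  shows "col P i \<noteq> 0\<^sub>v n"
proof
  assume z: "col P i = 0\<^sub>v n"
  have "col (Pi * P) i = Pi *\<^sub>v col P i" by (rule col_mult2[OF assms(2,1,4)])
  hence "Pi *\<^sub>v col P i = unit_vec n i" using assms(3,4) by simp
  hence "unit_vec n i = Pi *\<^sub>v 0\<^sub>v n" using z by simp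
  also have "\<dots> = 0\<^sub>v n" using assms by simp
  finally show False using assms(4) unit_vec_nonzero by (metis index_unit_vec(1) index_zero_vec(1) less_not_refl2 zero_neq_one)
qed

lemma line_smult:
  fixes v :: "'a::field vec"
  assumes "t \<noteq> 0"
  shows "line (t \<cdot>\<^sub>v v) = line v"
proof -
  have 1: "{c \<cdot>\<^sub>v (t \<cdot>\<^sub>v v) |c. True} \<subseteq> {c \<cdot>\<^sub>v v |c. True}"
  proof
    fix x assume "x \<in> {c \<cdot>\<^sub>v (t \<cdot>\<^sub>v v) |c. True}"
    then obtain c where x: "x = c \<cdot>\<^sub>v (t \<cdot>\<^sub>v v)" by blast
    have "x = (c * t) \<cdot>\<^sub>v v" using x by (simp add: smult_smult_assoc)
    then show "x \<in> {c \<cdot>\<^sub>v v |c. True}" by blast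
  qed
  have 2: "{c \<cdot>\<^sub>v v |c. True} \<subseteq> {c \<cdot>\<^sub>v (t \<cdot>\<^sub>v v) |c. True}"
  proof
    fix x assume "x \<in> {c \<cdot>\<^sub>v v |c. True}"
    then obtain c where x: "x = c \<cdot>\<^sub>v v" by blast
    have "x = (c / t) \<cdot>\<^sub>v (t \<cdot>\<^sub>v v)" using assms x by (simp add: smult_smult_assoc)
    then show "x \<in> {c \<cdot>\<^sub>v (t \<cdot>\<^sub>v v) |c. True}" by blast
  qed
  from 1 2 show ?thesis unfolding line_def by blast
qed

lemma ker_low:
  fixes P Pi X :: "'a::field mat"
  assumes P: "P \<in> carrier_mat n n" "Pi \<in> carrier_mat n n" "Pi * P = 1\<^sub>m n" "P * Pi = 1\<^sub>m n"
    and X: "X \<in> carrier_mat n n" and XP: "X * P = P * lowM n f"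
    and f: "\<forall>j. 1 \<le> j \<and> j < n \<longrightarrow> f j \<noteq> 0"
    and x: "x \<in> carrier_vec n" "X *\<^sub>v x = 0\<^sub>v n" and n: "0 < n"
  shows "\<exists>t. x = t \<cdot>\<^sub>v col P 0"
proof -
  define c where "c = Pi *\<^sub>v x"
  have cc: "c \<in> carrier_vec n" using P x by (simp add: c_def)
  have xc: "x = P *\<^sub>v c"
  proof -
    have "(P * Pi) *\<^sub>v x = P *\<^sub>v c" unfolding c_def by (rule assoc_mult_mat_vec[OF P(1,2) x(1)])
    then show ?thesis using P(4) x(1) by simp
  qed
  have "X *\<^sub>v x = (X * P) *\<^sub>v c" using X P cc xc by simp
  also have "\<dots> = P *\<^sub>v (lowM n f *\<^sub>v c)" unfolding XP by (rule assoc_mult_mat_vec[OF P(1) lowM_carrier cc])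
  finally have "P *\<^sub>v (lowM n f *\<^sub>v c) = 0\<^sub>v n" using x by simp
  hence "Pi *\<^sub>v (P *\<^sub>v (lowM n f *\<^sub>v c)) = 0\<^sub>v n" using P by simp
  moreover have lc: "lowM n f *\<^sub>v c \<in> carrier_vec n" by (metis mult_mat_vec_carrier lowM_carrier cc)
  ultimately have lz: "lowM n f *\<^sub>v c = 0\<^sub>v n" using inv_cancel_vec[OF P(1,2,3) lc] by simp
  have cj: "c $ j = 0" if "1 \<le> j" "j < n" for j
  proof -
    have "(lowM n f *\<^sub>v c) $ (j - 1) = 0" using lz that by simp
    hence "f j * c $ j = 0" using that cc by (simp add: lowM_mult_vec)
    then show ?thesis using f that by simp
  qed
  have "c = (c $ 0) \<cdot>\<^sub>v unit_vec n 0"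
    by (rule eq_vecI) (use cc cj in \<open>auto simp: unit_vec_def\<close>)
  hence "x = P *\<^sub>v ((c $ 0) \<cdot>\<^sub>v unit_vec n 0)" using xc by simp
  also have "\<dots> = (c $ 0) \<cdot>\<^sub>v col P 0" using P n by (simp add: mult_mat_vec mult_unit_vec)
  finally show ?thesis by blast
qed


lemma dec_lines:
  assumes "decomposition n Vs"
  obtains P Pi where "P \<in> carrier_mat n n" "Pi \<in> carrier_mat n n" "P * Pi = 1\<^sub>m n" "Pi * P = 1\<^sub>m n"
    "length Vs = n" "\<And>i. i < n \<Longrightarrow> Vs ! i = line (col P i)"
proof -
  from assms obtain P where P: "P \<in> carrier_mat n n" "invertible_mat P"
    "\<forall>i<n. Vs ! i = {c \<cdot>\<^sub>v col P i | c. True}" "length Vs = n"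
    unfolding decomposition_def by blast
  obtain Pi where "Pi \<in> carrier_mat n n" "P * Pi = 1\<^sub>m n" "Pi * P = 1\<^sub>m n"
    using inv_of_invertible[OF P(1,2)] by blast
  then show ?thesis using that P by (auto simp: line_def)
qed

lemma in_line: "v \<in> line v"
proof -
  have "v = 1 \<cdot>\<^sub>v v" by simp
  then show ?thesis unfolding line_def by blast
qed

lemma col_mult_lowM:
  fixes P :: "'a::field mat"
  assumes "P \<in> carrier_mat n n" "j < n"
  shows "col (P * lowM n f) j = (if j = 0 then 0\<^sub>v n else f j \<cdot>\<^sub>v col P (j - 1))"
proof -
  have "col (P * lowM n f) j = P *\<^sub>v col (lowM n f) j" by (rule col_mult2[OF assms(1) lowM_carrier assms(2)])
  also have "\<dots> = (if j = 0 then 0\<^sub>v n else f j \<cdot>\<^sub>v col P (j - 1))"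
    using assms by (auto simp: col_lowM mult_mat_vec mult_unit_vec)
  finally show ?thesis .
qed

lemma col_mult_raiseM:
  fixes P :: "'a::field mat"
  assumes "P \<in> carrier_mat n n" "j < n"
  shows "col (P * raiseM n) j = (if Suc j < n then col P (Suc j) else 0\<^sub>v n)"
proof -
  have "col (P * raiseM n) j = P *\<^sub>v col (raiseM n) j" by (rule col_mult2[OF assms(1) raiseM_carrier assms(2)])
  also have "\<dots> = (if Suc j < n then col P (Suc j) else 0\<^sub>v n)"
    using assms by (auto simp: col_raiseM mult_unit_vec)
  finally show ?thesis .
qed

lemma low_col:
  fixes X P :: "'a::field mat"
  assumes "X \<in> carrier_mat n n" "P \<in> carrier_mat n n" "X * P = P * lowM n f" "i < n"
  shows "X *\<^sub>v col P i = (if i = 0 then 0\<^sub>v n else f i \<cdot>\<^sub>v col P (i - 1))"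
proof -
  have "col (X * P) i = X *\<^sub>v col P i" by (rule col_mult2[OF assms(1,2,4)])
  then show ?thesis using col_mult_lowM[OF assms(2,4), of f] assms(3) by simp
qed

lemma raise_col:
  fixes Y P :: "'a::field mat"
  assumes "Y \<in> carrier_mat n n" "P \<in> carrier_mat n n" "Y * P = P * raiseM n" "i < n"
  shows "Y *\<^sub>v col P i = (if Suc i < n then col P (Suc i) else 0\<^sub>v n)"
proof -
  have "col (Y * P) i = Y *\<^sub>v col P i" by (rule col_mult2[OF assms(1,2,4)])
  then show ?thesis using col_mult_raiseM[OF assms(2,4)] assms(3) by simp
qed

lemma LR_pair_normal:
  fixes X Y :: "'a::field mat"
  assumes LR: "LR_pair n X Y" and n: "n = Suc d"
  shows "\<exists>P Pi. P \<in> carrier_mat n n \<and> Pi \<in> carrier_mat n n \<and> P * Pi = 1\<^sub>m n \<and> Pi * P = 1\<^sub>m n \<and>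
     X * P = P * lowM n (param_seq n X Y) \<and> Y * P = P * raiseM n \<and>
     (\<forall>i. 1 \<le> i \<and> i < n \<longrightarrow> param_seq n X Y i \<noteq> 0) \<and>
     LR_dec n X Y = map (\<lambda>i. line (col P i)) [0..<n]"
proof -
  from LR have X: "X \<in> carrier_mat n n" and Y: "Y \<in> carrier_mat n n"
    and "\<exists>Vs. decomposition n Vs \<and> lowers n X Vs \<and> raises n Y Vs"
    unfolding LR_pair_def by auto
  then obtain Vs where dec: "decomposition n Vs" and low: "lowers n X Vs" and rai: "raises n Y Vs"
    by blast
  obtain P0 P0i where P0: "P0 \<in> carrier_mat n n" "P0i \<in> carrier_mat n n" "P0 * P0i = 1\<^sub>m n" "P0i * P0 = 1\<^sub>m n"
    and len: "length Vs = n" and Vs: "\<And>i. i < n \<Longrightarrow> Vs ! i = line (col P0 i)"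
    using dec_lines[OF dec] by blast
  have colc: "col P0 i \<in> carrier_vec n" for i using P0 by auto
  have colnz: "col P0 i \<noteq> 0\<^sub>v n" if "i < n" for i using inv_col_nz[OF P0(1,2,4) that] .
  have "\<forall>i. \<exists>m. 1 \<le> i \<and> i < n \<longrightarrow> m \<noteq> 0 \<and> X *\<^sub>v col P0 i = m \<cdot>\<^sub>v col P0 (i - 1)"
  proof
    fix i show "\<exists>m. 1 \<le> i \<and> i < n \<longrightarrow> m \<noteq> 0 \<and> X *\<^sub>v col P0 i = m \<cdot>\<^sub>v col P0 (i - 1)"
    proof (cases "1 \<le> i \<and> i < n")
      case True
      have img: "(\<lambda>x. X *\<^sub>v x) ` (Vs ! i) = Vs ! (i - 1)" using low True unfolding lowers_def by auto
      have "X *\<^sub>v col P0 i \<in> Vs ! (i - 1)" using img Vs[of i] True in_line by blast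
      then obtain m where m: "X *\<^sub>v col P0 i = m \<cdot>\<^sub>v col P0 (i - 1)"
        using Vs[of "i - 1"] True unfolding line_def by auto
      have "col P0 (i - 1) \<in> (\<lambda>x. X *\<^sub>v x) ` (Vs ! i)" using img Vs[of "i - 1"] True in_line by auto
      then obtain c where "col P0 (i - 1) = X *\<^sub>v (c \<cdot>\<^sub>v col P0 i)"
        using Vs[of i] True unfolding line_def by auto
      also have "\<dots> = c \<cdot>\<^sub>v (X *\<^sub>v col P0 i)" by (rule mult_mat_vec[OF X colc])
      also have "\<dots> = (c * m) \<cdot>\<^sub>v col P0 (i - 1)" using m by (simp add: smult_smult_assoc)
      finally have eq: "col P0 (i - 1) = (c * m) \<cdot>\<^sub>v col P0 (i - 1)" .
      have "m \<noteq> 0"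
      proof
        assume "m = 0"
        then have "col P0 (i - 1) = 0\<^sub>v n" using eq colc[of "i - 1"] by simp
        moreover have "i - 1 < n" using True by arith
        ultimately show False using colnz[of "i - 1"] by simp
      qed
      then show ?thesis using m by blast
    qed auto
  qed
  then obtain mu where mu: "\<And>i. 1 \<le> i \<Longrightarrow> i < n \<Longrightarrow> mu i \<noteq> 0 \<and> X *\<^sub>v col P0 i = mu i \<cdot>\<^sub>v col P0 (i - 1)"
    by metis
  have "\<forall>i. \<exists>m. Suc i < n \<longrightarrow> m \<noteq> 0 \<and> Y *\<^sub>v col P0 i = m \<cdot>\<^sub>v col P0 (Suc i)"
  proof
    fix i show "\<exists>m. Suc i < n \<longrightarrow> m \<noteq> 0 \<and> Y *\<^sub>v col P0 i = m \<cdot>\<^sub>v col P0 (Suc i)"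
    proof (cases "Suc i < n")
      case True
      have img: "(\<lambda>x. Y *\<^sub>v x) ` (Vs ! i) = Vs ! (Suc i)" using rai True unfolding raises_def by auto
      have "Y *\<^sub>v col P0 i \<in> Vs ! (Suc i)" using img Vs[of i] True in_line by auto
      then obtain m where m: "Y *\<^sub>v col P0 i = m \<cdot>\<^sub>v col P0 (Suc i)"
        using Vs[of "Suc i"] True unfolding line_def by auto
      have "col P0 (Suc i) \<in> (\<lambda>x. Y *\<^sub>v x) ` (Vs ! i)" using img Vs[of "Suc i"] True in_line by auto
      then obtain c where "col P0 (Suc i) = Y *\<^sub>v (c \<cdot>\<^sub>v col P0 i)"
        using Vs[of i] True unfolding line_def by auto
      also have "\<dots> = c \<cdot>\<^sub>v (Y *\<^sub>v col P0 i)" by (rule mult_mat_vec[OF Y colc])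
      also have "\<dots> = (c * m) \<cdot>\<^sub>v col P0 (Suc i)" using m by (simp add: smult_smult_assoc)
      finally have eq: "col P0 (Suc i) = (c * m) \<cdot>\<^sub>v col P0 (Suc i)" .
      have "m \<noteq> 0"
      proof
        assume "m = 0"
        then have "col P0 (Suc i) = 0\<^sub>v n" using eq colc[of "Suc i"] by simp
        then show False using colnz[of "Suc i"] True by simp
      qed
      then show ?thesis using m by blast
    qed auto
  qed
  then obtain nu where nu: "\<And>i. Suc i < n \<Longrightarrow> nu i \<noteq> 0 \<and> Y *\<^sub>v col P0 i = nu i \<cdot>\<^sub>v col P0 (Suc i)"
    by metis
  have X0: "X *\<^sub>v col P0 0 = 0\<^sub>v n"
  proof -
    have "(\<lambda>x. X *\<^sub>v x) ` (Vs ! 0) = {0\<^sub>v n}" using low unfolding lowers_def by auto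
    then show ?thesis using Vs[of 0] n in_line by auto
  qed
  have Yd: "Y *\<^sub>v col P0 d = 0\<^sub>v n"
  proof -
    have "(\<lambda>x. Y *\<^sub>v x) ` (Vs ! (n - 1)) = {0\<^sub>v n}" using rai unfolding raises_def by auto
    then show ?thesis using Vs[of d] n in_line by auto
  qed
  define g where "g i = (\<Prod>k<i. nu k)" for i
  have gnz: "g i \<noteq> 0" if "i < n" for i
    unfolding g_def using nu that by (auto simp: prod_zero_iff)
  have gS: "g (Suc i) = g i * nu i" for i unfolding g_def by simp
  define P where "P = mat n n (\<lambda>(r,j). g j * P0 $$ (r,j))"
  define Pi where "Pi = mat n n (\<lambda>(i,r). P0i $$ (i,r) / g i)"
  have Pc: "P \<in> carrier_mat n n" and Pic: "Pi \<in> carrier_mat n n" by (simp_all add: P_def Pi_def)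
  have colP: "col P j = g j \<cdot>\<^sub>v col P0 j" if "j < n" for j
    using that P0 by (intro eq_vecI) (auto simp: P_def)
  have PPi: "P * Pi = 1\<^sub>m n"
  proof (rule eq_matI)
    fix r s assume rs: "r < dim_row (1\<^sub>m n)" "s < dim_col (1\<^sub>m n)"
    have "(P * Pi) $$ (r,s) = (\<Sum>k = 0..<n. g k * P0 $$ (r,k) * (P0i $$ (k,s) / g k))"
      using rs by (simp add: P_def Pi_def scalar_prod_def)
    also have "\<dots> = (\<Sum>k = 0..<n. P0 $$ (r,k) * P0i $$ (k,s))" by (rule sum.cong) (auto simp: gnz)
    also have "\<dots> = (P0 * P0i) $$ (r,s)" using rs P0(1,2) by (simp add: scalar_prod_def)
    also have "\<dots> = 1\<^sub>m n $$ (r,s)" using P0(3) by simp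
    finally show "(P * Pi) $$ (r,s) = 1\<^sub>m n $$ (r,s)" .
  qed (auto simp: P_def Pi_def)
  have PiP: "Pi * P = 1\<^sub>m n"
  proof (rule eq_matI)
    fix i j assume ij: "i < dim_row (1\<^sub>m n)" "j < dim_col (1\<^sub>m n)"
    have "(Pi * P) $$ (i,j) = (\<Sum>r = 0..<n. P0i $$ (i,r) / g i * (g j * P0 $$ (r,j)))"
      using ij by (simp add: P_def Pi_def scalar_prod_def)
    also have "\<dots> = (g j / g i) * (\<Sum>r = 0..<n. P0i $$ (i,r) * P0 $$ (r,j))"
      by (simp add: sum_distrib_left algebra_simps)
    also have "(\<Sum>r = 0..<n. P0i $$ (i,r) * P0 $$ (r,j)) = (P0i * P0) $$ (i,j)"
      using ij P0(1,2) by (simp add: scalar_prod_def)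
    also have "\<dots> = 1\<^sub>m n $$ (i,j)" using P0(4) by simp
    finally show "(Pi * P) $$ (i,j) = 1\<^sub>m n $$ (i,j)" using ij gnz[of i] by auto
  qed (auto simp: P_def Pi_def)
  define phi where "phi j = mu j * g j / g (j - 1)" for j
  have phinz: "phi j \<noteq> 0" if "1 \<le> j" "j < n" for j
    using that mu[of j] gnz[of j] gnz[of "j - 1"] by (simp add: phi_def)
  have XP: "X * P = P * lowM n phi"
  proof (rule mat_eq_cols[of _ n n])
    show "X * P \<in> carrier_mat n n" using X Pc by simp
    show "P * lowM n phi \<in> carrier_mat n n" using Pc by simp
    fix j assume j: "j < n"
    have "col (X * P) j = X *\<^sub>v col P j" by (rule col_mult2[OF X Pc j])
    also have "\<dots> = g j \<cdot>\<^sub>v (X *\<^sub>v col P0 j)"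
      using colP[OF j] mult_mat_vec[OF X colc] by simp
    also have "\<dots> = (if j = 0 then 0\<^sub>v n else (g j * mu j) \<cdot>\<^sub>v col P0 (j - 1))"
      using X0 mu[of j] j by (auto simp: smult_smult_assoc)
    also have "\<dots> = col (P * lowM n phi) j"
    proof (cases "j = 0")
      case True then show ?thesis using col_mult_lowM[OF Pc j] by simp
    next
      case False
      have "col (P * lowM n phi) j = phi j \<cdot>\<^sub>v col P (j - 1)"
        using col_mult_lowM[OF Pc j] False by simp
      also have "\<dots> = (phi j * g (j - 1)) \<cdot>\<^sub>v col P0 (j - 1)"
        using colP[of "j - 1"] j by (simp add: smult_smult_assoc)
      also have "phi j * g (j - 1) = g j * mu j" using gnz[of "j - 1"] j by (simp add: phi_def)
      finally show ?thesis using False by simp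
    qed
    finally show "col (X * P) j = col (P * lowM n phi) j" .
  qed
  have YP: "Y * P = P * raiseM n"
  proof (rule mat_eq_cols[of _ n n])
    show "Y * P \<in> carrier_mat n n" using Y Pc by simp
    show "P * raiseM n \<in> carrier_mat n n" using Pc by simp
    fix j assume j: "j < n"
    have "col (Y * P) j = Y *\<^sub>v col P j" by (rule col_mult2[OF Y Pc j])
    also have "\<dots> = g j \<cdot>\<^sub>v (Y *\<^sub>v col P0 j)"
      using colP[OF j] mult_mat_vec[OF Y colc] by simp
    also have "\<dots> = (if Suc j < n then (g j * nu j) \<cdot>\<^sub>v col P0 (Suc j) else 0\<^sub>v n)"
    proof (cases "Suc j < n")
      case False
      then have "j = d" using j n by simp
      then show ?thesis using Yd False by simp
    qed (use nu in \<open>auto simp: smult_smult_assoc\<close>)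
    also have "\<dots> = col (P * raiseM n) j"
      using col_mult_raiseM[OF Pc j] colP[of "Suc j"] by (simp add: gS)
    finally show "col (Y * P) j = col (P * raiseM n) j" .
  qed
  have lineP: "Vs ! i = line (col P i)" if "i < n" for i
    using Vs[OF that] colP[OF that] line_smult[OF gnz[OF that]] by simp
  have uniq: "Ws = Vs" if W: "decomposition n Ws \<and> lowers n X Ws \<and> raises n Y Ws" for Ws
  proof -
    obtain P1 P1i where P1: "P1 \<in> carrier_mat n n" "P1i \<in> carrier_mat n n" "P1 * P1i = 1\<^sub>m n" "P1i * P1 = 1\<^sub>m n"
      and lenW: "length Ws = n" and Ws: "\<And>i. i < n \<Longrightarrow> Ws ! i = line (col P1 i)"
      using dec_lines[of n Ws] W by blast
    have "(\<lambda>x. X *\<^sub>v x) ` (Ws ! 0) = {0\<^sub>v n}" using W unfolding lowers_def by auto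
    then have "X *\<^sub>v col P1 0 = 0\<^sub>v n" using Ws[of 0] n in_line by auto
    then obtain t where t: "col P1 0 = t \<cdot>\<^sub>v col P 0"
      using ker_low[OF Pc Pic PiP PPi X XP _ _ _] phinz P1 n by (metis col_dim carrier_matD(1) carrier_vecI zero_less_Suc)
    have "t \<noteq> 0"
    proof
      assume "t = 0"
      then have "col P1 0 = 0\<^sub>v n" using t smult_zero_vec[OF col_dim[of P 0]] Pc by simp
      then show False using inv_col_nz[OF P1(1,2,4)] n by simp
    qed
    then have W0: "Ws ! 0 = Vs ! 0" using Ws[of 0] lineP[of 0] n t line_smult by simp
    have "\<forall>i. i < n \<longrightarrow> Ws ! i = Vs ! i"
    proof (intro allI)
      fix i show "i < n \<longrightarrow> Ws ! i = Vs ! i"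
      proof (induction i)
        case 0 then show ?case using W0 by simp
      next
        case (Suc i)
        show ?case
        proof
          assume i: "Suc i < n"
          have "Ws ! Suc i = (\<lambda>x. Y *\<^sub>v x) ` (Ws ! i)" using W i unfolding raises_def by auto
          also have "\<dots> = (\<lambda>x. Y *\<^sub>v x) ` (Vs ! i)" using Suc i by simp
          also have "\<dots> = Vs ! Suc i" using rai i unfolding raises_def by auto
          finally show "Ws ! Suc i = Vs ! Suc i" .
        qed
      qed
    qed
    then show ?thesis using lenW len by (intro nth_equalityI) auto
  qed
  have LRd: "LR_dec n X Y = Vs"
    unfolding LR_dec_def by (rule the_equality[OF _ uniq]) (use dec low rai in blast, assumption)
  have Ystep: "Y *\<^sub>v (phi i \<cdot>\<^sub>v col P (i - 1)) = phi i \<cdot>\<^sub>v col P i"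
    if i: "1 \<le> i" "i < n" for i
  proof -
    have i1: "i - 1 < n" "Suc (i - 1) = i" using i by auto
    then have "Y *\<^sub>v col P (i - 1) = col P i" using raise_col[OF Y Pc YP i1(1)] i by simp
    moreover have "col P (i - 1) \<in> carrier_vec n" using Pc by auto
    ultimately show ?thesis using mult_mat_vec[OF Y] by simp
  qed
  have param: "param_seq n X Y i = phi i" if i: "1 \<le> i" "i < n" for i
    unfolding param_seq_def
  proof (rule the_equality)
    show "\<forall>x\<in>LR_dec n X Y ! i. (Y * X) *\<^sub>v x = phi i \<cdot>\<^sub>v x"
    proof
      fix x assume "x \<in> LR_dec n X Y ! i"
      then obtain c where x: "x = c \<cdot>\<^sub>v col P i" using LRd lineP[of i] i unfolding line_def by auto
      have cPc: "col P i \<in> carrier_vec n" using Pc by auto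
      have "(Y * X) *\<^sub>v x = Y *\<^sub>v (X *\<^sub>v x)" using X Y x cPc by simp
      also have "\<dots> = c \<cdot>\<^sub>v (Y *\<^sub>v (X *\<^sub>v col P i))"
        using x cPc X Y by (simp add: mult_mat_vec)
      also have "X *\<^sub>v col P i = phi i \<cdot>\<^sub>v col P (i - 1)" using low_col[OF X Pc XP] i by simp
      also have "Y *\<^sub>v (phi i \<cdot>\<^sub>v col P (i - 1)) = phi i \<cdot>\<^sub>v col P i"
        using Ystep[OF i] .
      finally show "(Y * X) *\<^sub>v x = phi i \<cdot>\<^sub>v x" using x by (simp add: smult_smult_assoc mult.commute)
    qed
  next
    fix c assume c: "\<forall>x\<in>LR_dec n X Y ! i. (Y * X) *\<^sub>v x = c \<cdot>\<^sub>v x"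
    have cPc: "col P i \<in> carrier_vec n" using Pc by auto
    have "col P i \<in> LR_dec n X Y ! i" using LRd lineP[of i] i in_line by simp
    then have "(Y * X) *\<^sub>v col P i = c \<cdot>\<^sub>v col P i" using c by blast
    moreover have "(Y * X) *\<^sub>v col P i = phi i \<cdot>\<^sub>v col P i"
    proof -
      have "(Y * X) *\<^sub>v col P i = Y *\<^sub>v (X *\<^sub>v col P i)" using X Y cPc by simp
      also have "X *\<^sub>v col P i = phi i \<cdot>\<^sub>v col P (i - 1)" using low_col[OF X Pc XP] i by simp
      also have "Y *\<^sub>v (phi i \<cdot>\<^sub>v col P (i - 1)) = phi i \<cdot>\<^sub>v col P i"
        using Ystep[OF i] .
      finally show ?thesis .
    qed
    ultimately have "c \<cdot>\<^sub>v col P i = phi i \<cdot>\<^sub>v col P i" by simp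
    then show "c = phi i" using smult_cancel inv_col_nz[OF Pc Pic PiP i(2)] cPc by (metis carrier_vecD)
  qed
  have lowEq: "lowM n (param_seq n X Y) = lowM n phi"
    unfolding lowM_def using param by (intro eq_matI) auto
  show ?thesis
    apply (rule exI[of _ P], rule exI[of _ Pi])
    using Pc Pic PPi PiP XP YP lowEq param phinz LRd lineP len
    by (auto intro!: nth_equalityI)
qed


lemma trace_comm:
  fixes A B :: "'a::field mat"
  assumes "A \<in> carrier_mat n m" "B \<in> carrier_mat m n"
  shows "mat_trace (A * B) = mat_trace (B * A)"
proof -
  have "mat_trace (A * B) = (\<Sum>i\<in>{0..<n}. \<Sum>l\<in>{0..<m}. A $$ (i,l) * B $$ (l,i))"
    using assms by (simp add: mat_trace_def scalar_prod_def atLeast0LessThan)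
  also have "\<dots> = (\<Sum>l\<in>{0..<m}. \<Sum>i\<in>{0..<n}. A $$ (i,l) * B $$ (l,i))" by (rule sum.swap)
  also have "\<dots> = (\<Sum>l\<in>{0..<m}. \<Sum>i\<in>{0..<n}. B $$ (l,i) * A $$ (i,l))" by (simp add: mult.commute)
  also have "\<dots> = mat_trace (B * A)"
    using assms by (simp add: mat_trace_def scalar_prod_def atLeast0LessThan)
  finally show ?thesis .
qed

definition ekM :: "nat \<Rightarrow> nat \<Rightarrow> 'a::field mat" where
  "ekM n k = mat n n (\<lambda>(i,j). if i = k \<and> j = k then 1 else 0)"

lemma ekM_carrier[simp]: "ekM n k \<in> carrier_mat n n" by (simp add: ekM_def)

lemma col_ekM: "j < n \<Longrightarrow> k < n \<Longrightarrow> col (ekM n k) j = (if j = k then unit_vec n k else 0\<^sub>v n)"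
  by (intro eq_vecI) (auto simp: ekM_def unit_vec_def)

lemma proj_comp_unique:
  fixes E1 E2 P Pi :: "'a::field mat"
  assumes P: "P \<in> carrier_mat n n" "Pi \<in> carrier_mat n n" "P * Pi = 1\<^sub>m n"
    and E: "E1 \<in> carrier_mat n n" "E2 \<in> carrier_mat n n"
    and h1: "\<forall>j<n. \<forall>x \<in> line (col P j). E1 *\<^sub>v x = (if j = k then x else 0\<^sub>v n)"
    and h2: "\<forall>j<n. \<forall>x \<in> line (col P j). E2 *\<^sub>v x = (if j = k then x else 0\<^sub>v n)"
  shows "E1 = E2"
proof -
  have "E1 * P = E2 * P"
  proof (rule mat_eq_cols[of _ n n])
    fix j assume j: "j < n"
    have "col (E1 * P) j = E1 *\<^sub>v col P j" by (rule col_mult2[OF E(1) P(1) j])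
    also have "\<dots> = E2 *\<^sub>v col P j" using h1 h2 j in_line by metis
    also have "\<dots> = col (E2 * P) j" by (rule col_mult2[OF E(2) P(1) j, symmetric])
    finally show "col (E1 * P) j = col (E2 * P) j" .
  qed (use E P in auto)
  then have "E1 * P * Pi = E2 * P * Pi" by simp
  then show ?thesis using P E by (simp add: assoc_mult_mat[of _ n n _ n _ n])
qed

lemma trace_proj:
  fixes C P Pi :: "'a::field mat"
  assumes P: "P \<in> carrier_mat n n" "Pi \<in> carrier_mat n n" "P * Pi = 1\<^sub>m n" "Pi * P = 1\<^sub>m n"
    and C: "C \<in> carrier_mat n n" and k: "k < n"
  shows "mat_trace (C * proj_comp n (map (\<lambda>i. line (col P i)) [0..<n]) k) = (Pi *\<^sub>v (C *\<^sub>v col P k)) $ k"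
proof -
  define E where "E = P * ekM n k * Pi"
  have Ec: "E \<in> carrier_mat n n" using P unfolding E_def by (meson mult_carrier_mat ekM_carrier)
  have hE: "\<forall>j<n. \<forall>x \<in> line (col P j). E *\<^sub>v x = (if j = k then x else 0\<^sub>v n)"
  proof (intro allI impI ballI)
    fix j x assume j: "j < n" and x: "x \<in> line (col P j)"
    then obtain c where xc: "x = c \<cdot>\<^sub>v col P j" unfolding line_def by auto
    have cPc: "col P j \<in> carrier_vec n" using P by auto
    have "col (Pi * P) j = Pi *\<^sub>v col P j" by (rule col_mult2[OF P(2,1) j])
    then have "Pi *\<^sub>v col P j = unit_vec n j" using P(4) j by simp
    have PE: "P * ekM n k \<in> carrier_mat n n" using P by (meson mult_carrier_mat ekM_carrier)
    have Pic: "Pi *\<^sub>v col P j \<in> carrier_vec n" using P cPc by (meson mult_mat_vec_carrier)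
    have "E *\<^sub>v col P j = P *\<^sub>v (ekM n k *\<^sub>v (Pi *\<^sub>v col P j))"
      unfolding E_def using assoc_mult_mat_vec[OF PE P(2) cPc] assoc_mult_mat_vec[OF P(1) ekM_carrier Pic]
      by simp
    also have "\<dots> = P *\<^sub>v col (ekM n k) j" using \<open>Pi *\<^sub>v col P j = unit_vec n j\<close> j
      mult_unit_vec[OF ekM_carrier[where 'a='a] j] by simp
    also have "\<dots> = (if j = k then col P k else 0\<^sub>v n)" using col_ekM[where 'a='a, OF j k] P k
      mult_unit_vec[OF P(1) k] by simp
    finally have "E *\<^sub>v col P j = (if j = k then col P k else 0\<^sub>v n)" .
    then show "E *\<^sub>v x = (if j = k then x else 0\<^sub>v n)"
      using xc mult_mat_vec[OF Ec cPc] by auto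
  qed
  have pc: "proj_comp n (map (\<lambda>i. line (col P i)) [0..<n]) k = E"
    unfolding proj_comp_def
  proof (rule the_equality)
    show "E \<in> carrier_mat n n \<and> (\<forall>j<n. \<forall>x\<in>map (\<lambda>i. line (col P i)) [0..<n] ! j. E *\<^sub>v x = (if j = k then x else 0\<^sub>v n))"
      using Ec hE by simp
  next
    fix E' assume "E' \<in> carrier_mat n n \<and> (\<forall>j<n. \<forall>x\<in>map (\<lambda>i. line (col P i)) [0..<n] ! j. E' *\<^sub>v x = (if j = k then x else 0\<^sub>v n))"
    then show "E' = E" using proj_comp_unique[OF P(1,2,3) _ Ec _ hE] by simp
  qed
  define M where "M = Pi * C * P"
  have Mc: "M \<in> carrier_mat n n" using P C unfolding M_def by (meson mult_carrier_mat)
  have "C * E = (C * P * ekM n k) * Pi" unfolding E_def using P C by (simp add: assoc_mult_mat[of _ n n _ n _ n])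
  then have "mat_trace (C * E) = mat_trace (Pi * (C * P * ekM n k))"
    using trace_comm[of "C * P * ekM n k" n n Pi] P C
      mult_carrier_mat[OF mult_carrier_mat[OF C P(1)] ekM_carrier[where 'a='a and n=n and k=k]] by simp
  also have "Pi * (C * P * ekM n k) = M * ekM n k" unfolding M_def using P C by (simp add: assoc_mult_mat[of _ n n _ n _ n])
  also have "mat_trace (M * ekM n k) = (\<Sum>i<n. if i = k then M $$ (k,k) else 0)"
    unfolding mat_trace_def
  proof (rule sum.cong)
    show "{..<dim_row (M * ekM n k)} = {..<n}" using Mc by simp
  next
    fix i assume i: "i \<in> {..<n}"
    then have i': "i < n" by simp
    have "(M * ekM n k) $$ (i,i) = (\<Sum>l\<in>{0..<n}. M $$ (i,l) * (if l = k \<and> i = k then 1 else 0))"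
      using i' Mc by (simp add: ekM_def scalar_prod_def)
    also have "\<dots> = (if i = k then M $$ (k,k) else 0)"
    proof (cases "i = k")
      case True then show ?thesis using k by (subst sum_single_nz[of k]) auto
    qed simp
    finally show "(M * ekM n k) $$ (i,i) = (if i = k then M $$ (k,k) else 0)" .
  qed
  also have "\<dots> = M $$ (k,k)" using k by simp
  also have "M $$ (k,k) = col M k $ k" using Mc k by simp
  also have "col M k = (Pi * C) *\<^sub>v col P k" unfolding M_def by (rule col_mult2[of _ n n]) (use P C k in auto)
  also have "\<dots> = Pi *\<^sub>v (C *\<^sub>v col P k)"
    by (rule assoc_mult_mat_vec[OF P(2) C]) (use P in auto)
  finally show ?thesis using pc by simp
qed



fun yseq :: "(nat \<Rightarrow> 'a::field) \<Rightarrow> 'a \<Rightarrow> 'a \<Rightarrow> nat \<Rightarrow> 'a" where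
  "yseq f a k 0 = 1"
| "yseq f a k (Suc 0) = a / f 1"
| "yseq f a k (Suc (Suc m)) = (a * yseq f a k (Suc m) + k * yseq f a k m) / f (Suc (Suc m))"

lemma aux_div1:
  fixes f x a c0 :: "'a::field"
  assumes "f \<noteq> 0" "f * x = a * c0"
  shows "x = c0 * (a / f)"
proof -
  have "x = (a * c0) / f" using assms by (simp add: eq_divide_eq mult.commute)
  then show ?thesis by simp
qed

lemma aux_div2:
  fixes f x a k c0 y1 y2 :: "'a::field"
  assumes "f \<noteq> 0" "f * x = a * (c0 * y1) + k * (c0 * y2)"
  shows "x = c0 * ((a * y1 + k * y2) / f)"
proof -
  have "x = (a * (c0 * y1) + k * (c0 * y2)) / f" using assms by (simp add: eq_divide_eq mult.commute)
  also have "a * (c0 * y1) + k * (c0 * y2) = c0 * (a * y1 + k * y2)" by (simp add: algebra_simps)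
  finally show ?thesis by simp
qed

lemma rec_solve:
  fixes c :: "'a::field vec"
  assumes f: "\<forall>j. 1 \<le> j \<and> j < n \<longrightarrow> f j \<noteq> 0"
    and r: "\<forall>m. Suc m < n \<longrightarrow> f (Suc m) * c $ (Suc m) = a * c $ m + k * (if m = 0 then 0 else c $ (m - 1))"
  shows "m < n \<Longrightarrow> c $ m = c $ 0 * yseq f a k m"
proof (induction m rule: less_induct)
  case (less m)
  show ?case
  proof (cases m)
    case 0 then show ?thesis by simp
  next
    case (Suc m')
    show ?thesis
    proof (cases m')
      case 0
      have l1: "Suc 0 < n" using less.prems Suc 0 by simp
      have "f (Suc 0) * c $ (Suc 0) = a * c $ 0" using spec[OF r, of 0] l1 by simp
      moreover have "f (Suc 0) \<noteq> 0" using spec[OF f, of "Suc 0"] l1 by simp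
      ultimately have "c $ (Suc 0) = c $ 0 * (a / f (Suc 0))" using aux_div1 by blast
      moreover have "yseq f a k (Suc 0) = a / f (Suc 0)" by simp
      ultimately show ?thesis using Suc 0 by simp
    next
      case (Suc m'')
      have mm: "m = Suc (Suc m'')" using \<open>m = Suc m'\<close> Suc by simp
      have eq: "f (Suc (Suc m'')) * c $ (Suc (Suc m'')) = a * c $ (Suc m'') + k * c $ m''"
        using spec[OF r, of "Suc m''"] less.prems mm by simp
      have nz: "f (Suc (Suc m'')) \<noteq> 0" using spec[OF f, of "Suc (Suc m'')"] less.prems mm by simp
      have ih1: "c $ Suc m'' = c $ 0 * yseq f a k (Suc m'')" using less.IH[of "Suc m''"] less.prems mm by simp
      have ih2: "c $ m'' = c $ 0 * yseq f a k m''" using less.IH[of m''] less.prems mm by simp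
      have eq': "f (Suc (Suc m'')) * c $ (Suc (Suc m'')) = a * (c $ 0 * yseq f a k (Suc m'')) + k * (c $ 0 * yseq f a k m'')"
        using eq unfolding ih1[symmetric] ih2[symmetric] .
      have "c $ (Suc (Suc m'')) = c $ 0 * ((a * yseq f a k (Suc m'') + k * yseq f a k m'') / f (Suc (Suc m'')))"
        by (rule aux_div2[OF nz eq'])
      then show ?thesis using mm by simp
    qed
  qed
qed

lemma triple_data:
  fixes A B C :: "'a::field mat"
  assumes T: "LR_triple n A B C" and n: "n = Suc d" and d: "1 \<le> d"
  obtains Q Qi c P Pi where "Q \<in> carrier_mat n n" "Qi \<in> carrier_mat n n" "Q * Qi = 1\<^sub>m n" "Qi * Q = 1\<^sub>m n"
     "C * Q = Q * lowM n (param_seq n C A)" "A * Q = Q * raiseM n"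
     "\<forall>j. 1 \<le> j \<and> j < n \<longrightarrow> param_seq n C A j \<noteq> 0"
     "c \<in> carrier_vec n" "c \<noteq> 0\<^sub>v n"
     "\<forall>m. Suc m < n \<longrightarrow> param_seq n C A (Suc m) * c $ (Suc m) =
        trace_a n A B C d * c $ m + (param_seq n B C 1 / param_seq n A B d) * (if m = 0 then 0 else c $ (m - 1))"
     "P \<in> carrier_mat n n" "Pi \<in> carrier_mat n n" "P * Pi = 1\<^sub>m n" "Pi * P = 1\<^sub>m n"
     "A * P = P * lowM n (param_seq n A B)" "B * P = P * raiseM n"
     "\<forall>j. 1 \<le> j \<and> j < n \<longrightarrow> param_seq n A B j \<noteq> 0" "Q *\<^sub>v c = col P d"
proof -
  from T have AB: "LR_pair n A B" and BC: "LR_pair n B C" and CA: "LR_pair n C A" unfolding LR_triple_def by auto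
  have A: "A \<in> carrier_mat n n" and B: "B \<in> carrier_mat n n" and C: "C \<in> carrier_mat n n"
    using AB BC unfolding LR_pair_def by auto
  define phi where "phi = param_seq n A B"
  define phi' where "phi' = param_seq n B C"
  define phi'' where "phi'' = param_seq n C A"
  obtain P Pi where P: "P \<in> carrier_mat n n" "Pi \<in> carrier_mat n n" "P * Pi = 1\<^sub>m n" "Pi * P = 1\<^sub>m n"
    and AP: "A * P = P * lowM n phi" and BP: "B * P = P * raiseM n"
    and phinz: "\<forall>i. 1 \<le> i \<and> i < n \<longrightarrow> phi i \<noteq> 0"
    and decAB: "LR_dec n A B = map (\<lambda>i. line (col P i)) [0..<n]"
    using LR_pair_normal[OF AB n] unfolding phi_def by blast
  obtain P2 P2i where P2: "P2 \<in> carrier_mat n n" "P2i \<in> carrier_mat n n" "P2 * P2i = 1\<^sub>m n" "P2i * P2 = 1\<^sub>m n"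
    and BP2: "B * P2 = P2 * lowM n phi'" and CP2: "C * P2 = P2 * raiseM n"
    and phi'nz: "\<forall>i. 1 \<le> i \<and> i < n \<longrightarrow> phi' i \<noteq> 0"
    using LR_pair_normal[OF BC n] unfolding phi'_def by blast
  obtain Q Qi where Q: "Q \<in> carrier_mat n n" "Qi \<in> carrier_mat n n" "Q * Qi = 1\<^sub>m n" "Qi * Q = 1\<^sub>m n"
    and CQ: "C * Q = Q * lowM n phi''" and AQ: "A * Q = Q * raiseM n"
    and phi''nz: "\<forall>i. 1 \<le> i \<and> i < n \<longrightarrow> phi'' i \<noteq> 0"
    using LR_pair_normal[OF CA n] unfolding phi''_def by blast
  define z where "z = col P d"
  have d_lt: "d < n" "d - 1 < n" "Suc (d - 1) = d" "1 < n" using n d by auto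
  have zc: "z \<in> carrier_vec n" using P unfolding z_def by auto
  have znz: "z \<noteq> 0\<^sub>v n" using inv_col_nz[OF P(1,2,4) d_lt(1)] unfolding z_def .
  have Bz: "B *\<^sub>v z = 0\<^sub>v n" using raise_col[OF B P(1) BP d_lt(1)] n unfolding z_def by simp
  obtain t where t: "z = t \<cdot>\<^sub>v col P2 0"
    using ker_low[OF P2(1,2,4,3) B BP2 phi'nz zc Bz] n by auto
  have c2c: "col P2 i \<in> carrier_vec n" for i using P2 by auto
  have CP20: "C *\<^sub>v col P2 0 = col P2 1" using raise_col[OF C P2(1) CP2, of 0] d_lt by simp
  have BP21: "B *\<^sub>v col P2 1 = phi' 1 \<cdot>\<^sub>v col P2 0" using low_col[OF B P2(1) BP2, of 1] d_lt by simp
  have Cz: "C *\<^sub>v z = t \<cdot>\<^sub>v col P2 1" using t CP20 mult_mat_vec[OF C c2c] by simp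
  have BCz: "B *\<^sub>v (C *\<^sub>v z) = phi' 1 \<cdot>\<^sub>v z"
    using Cz BP21 t mult_mat_vec[OF B c2c] by (simp add: smult_smult_assoc mult.commute)
  define m where "m = Pi *\<^sub>v (C *\<^sub>v z)"
  have Czc: "C *\<^sub>v z \<in> carrier_vec n" using C zc by (meson mult_mat_vec_carrier)
  have mc: "m \<in> carrier_vec n" using P(2) Czc unfolding m_def by (meson mult_mat_vec_carrier)
  have Czm: "C *\<^sub>v z = P *\<^sub>v m"
  proof -
    have "(P * Pi) *\<^sub>v (C *\<^sub>v z) = P *\<^sub>v m" unfolding m_def by (rule assoc_mult_mat_vec[OF P(1,2) Czc])
    then show ?thesis using P(3) Czc by simp
  qed
  have rmc: "raiseM n *\<^sub>v m \<in> carrier_vec n" using mc by (meson mult_mat_vec_carrier raiseM_carrier)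
  have "P *\<^sub>v (raiseM n *\<^sub>v m) = (P * raiseM n) *\<^sub>v m" by (rule assoc_mult_mat_vec[OF P(1) raiseM_carrier mc, symmetric])
  also have "\<dots> = (B * P) *\<^sub>v m" using BP by simp
  also have "\<dots> = B *\<^sub>v (P *\<^sub>v m)" by (rule assoc_mult_mat_vec[OF B P(1) mc])
  also have "\<dots> = phi' 1 \<cdot>\<^sub>v z" using BCz Czm by simp
  also have "\<dots> = P *\<^sub>v (phi' 1 \<cdot>\<^sub>v unit_vec n d)"
    unfolding z_def using mult_mat_vec[OF P(1) unit_vec_carrier] mult_unit_vec[OF P(1) d_lt(1)] by simp
  finally have "Pi *\<^sub>v (P *\<^sub>v (raiseM n *\<^sub>v m)) = Pi *\<^sub>v (P *\<^sub>v (phi' 1 \<cdot>\<^sub>v unit_vec n d))" by simp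
  then have rm: "raiseM n *\<^sub>v m = phi' 1 \<cdot>\<^sub>v unit_vec n d"
    using inv_cancel_vec[OF P(1,2,4) rmc] inv_cancel_vec[OF P(1,2,4), of "phi' 1 \<cdot>\<^sub>v unit_vec n d"] by simp
  have mj: "m $ j = (if Suc j = d then phi' 1 else 0)" if "Suc j < n" for j
  proof -
    have "(raiseM n *\<^sub>v m) $ Suc j = m $ j" using mc that by (simp add: raiseM_mult_vec)
    then show ?thesis using rm that by (cases "Suc j = d") (simp_all add: unit_vec_def)
  qed
  have trd: "trace_a n A B C d = m $ d"
    unfolding trace_a_def decAB m_def z_def by (rule trace_proj[OF P C d_lt(1)])
  define a where "a = trace_a n A B C d"
  have mform: "m = a \<cdot>\<^sub>v unit_vec n d + phi' 1 \<cdot>\<^sub>v unit_vec n (d - 1)"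
  proof (rule eq_vecI)
    fix i assume "i < dim_vec (a \<cdot>\<^sub>v unit_vec n d + phi' 1 \<cdot>\<^sub>v unit_vec n (d - 1))"
    then have i: "i < n" by simp
    show "m $ i = (a \<cdot>\<^sub>v unit_vec n d + phi' 1 \<cdot>\<^sub>v unit_vec n (d - 1)) $ i"
    proof (cases "i = d")
      case True then show ?thesis using trd d i by (simp add: a_def unit_vec_def)
    next
      case False
      then have "Suc i < n" using i n by simp
      then show ?thesis using mj[of i] False i d by (auto simp: unit_vec_def)
    qed
  qed (use mc in simp)
  have cPd1: "col P (d - 1) \<in> carrier_vec n" using P by auto
  have Cz2: "C *\<^sub>v z = a \<cdot>\<^sub>v z + phi' 1 \<cdot>\<^sub>v col P (d - 1)"
  proof -
    have "C *\<^sub>v z = P *\<^sub>v (a \<cdot>\<^sub>v unit_vec n d) + P *\<^sub>v (phi' 1 \<cdot>\<^sub>v unit_vec n (d - 1))"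
      using Czm mform mult_add_distrib_mat_vec[OF P(1)] by simp
    also have "\<dots> = a \<cdot>\<^sub>v z + phi' 1 \<cdot>\<^sub>v col P (d - 1)"
      unfolding z_def using mult_mat_vec[OF P(1) unit_vec_carrier] mult_unit_vec[OF P(1) d_lt(1)]
        mult_unit_vec[OF P(1) d_lt(2)] by simp
    finally show ?thesis .
  qed
  have Az: "A *\<^sub>v z = phi d \<cdot>\<^sub>v col P (d - 1)" using low_col[OF A P(1) AP d_lt(1)] d unfolding z_def by simp
  define kap where "kap = phi' 1 / phi d"
  have phid: "phi d \<noteq> 0" using phinz d_lt d by auto
  have Cz3: "C *\<^sub>v z = a \<cdot>\<^sub>v z + kap \<cdot>\<^sub>v (A *\<^sub>v z)"
    using Cz2 Az phid by (simp add: kap_def smult_smult_assoc)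
  define c where "c = Qi *\<^sub>v z"
  have cc: "c \<in> carrier_vec n" using Q(2) zc unfolding c_def by (meson mult_mat_vec_carrier)
  have zQ: "Q *\<^sub>v c = z"
  proof -
    have "(Q * Qi) *\<^sub>v z = Q *\<^sub>v c" unfolding c_def by (rule assoc_mult_mat_vec[OF Q(1,2) zc])
    then show ?thesis using Q(3) zc by simp
  qed
  have lcc: "lowM n phi'' *\<^sub>v c \<in> carrier_vec n" using cc by (meson mult_mat_vec_carrier lowM_carrier)
  have rcc: "raiseM n *\<^sub>v c \<in> carrier_vec n" using cc by (meson mult_mat_vec_carrier raiseM_carrier)
  have CzQ: "C *\<^sub>v z = Q *\<^sub>v (lowM n phi'' *\<^sub>v c)"
  proof -
    have "C *\<^sub>v z = (C * Q) *\<^sub>v c" using zQ assoc_mult_mat_vec[OF C Q(1) cc] by simp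
    also have "\<dots> = Q *\<^sub>v (lowM n phi'' *\<^sub>v c)" unfolding CQ by (rule assoc_mult_mat_vec[OF Q(1) lowM_carrier cc])
    finally show ?thesis .
  qed
  have AzQ: "A *\<^sub>v z = Q *\<^sub>v (raiseM n *\<^sub>v c)"
  proof -
    have "A *\<^sub>v z = (A * Q) *\<^sub>v c" using zQ assoc_mult_mat_vec[OF A Q(1) cc] by simp
    also have "\<dots> = Q *\<^sub>v (raiseM n *\<^sub>v c)" unfolding AQ by (rule assoc_mult_mat_vec[OF Q(1) raiseM_carrier cc])
    finally show ?thesis .
  qed
  define w where "w = a \<cdot>\<^sub>v c + kap \<cdot>\<^sub>v (raiseM n *\<^sub>v c)"
  have wc: "w \<in> carrier_vec n" using cc rcc unfolding w_def by simp
  have "Q *\<^sub>v w = a \<cdot>\<^sub>v (Q *\<^sub>v c) + kap \<cdot>\<^sub>v (Q *\<^sub>v (raiseM n *\<^sub>v c))"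
    unfolding w_def using mult_add_distrib_mat_vec[OF Q(1)] mult_mat_vec[OF Q(1)] cc rcc by simp
  also have "\<dots> = Q *\<^sub>v (lowM n phi'' *\<^sub>v c)" using Cz3 CzQ AzQ zQ by simp
  finally have "Qi *\<^sub>v (Q *\<^sub>v w) = Qi *\<^sub>v (Q *\<^sub>v (lowM n phi'' *\<^sub>v c))" by simp
  then have lw: "lowM n phi'' *\<^sub>v c = w" using inv_cancel_vec[OF Q(1,2,4) wc] inv_cancel_vec[OF Q(1,2,4) lcc] by simp
  have rec: "\<forall>j. Suc j < n \<longrightarrow> phi'' (Suc j) * c $ (Suc j) = a * c $ j + kap * (if j = 0 then 0 else c $ (j - 1))"
  proof (intro allI impI)
    fix j assume j: "Suc j < n"
    have "(lowM n phi'' *\<^sub>v c) $ j = w $ j" using lw by simp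
    then show "phi'' (Suc j) * c $ (Suc j) = a * c $ j + kap * (if j = 0 then 0 else c $ (j - 1))"
      using j cc rcc by (simp add: lowM_mult_vec raiseM_mult_vec w_def)
  qed
  have cnz: "c \<noteq> 0\<^sub>v n"
  proof
    assume "c = 0\<^sub>v n"
    then have "z = 0\<^sub>v n" using zQ Q(1) by simp
    then show False using znz by simp
  qed
  note F = Q CQ AQ phi''nz cc cnz rec P AP BP phinz zQ
  note G = F[unfolded phi_def phi'_def phi''_def a_def kap_def z_def]
  show thesis by (rule that[of Q Qi c P Pi]) (fact G)+
qed

lemma cancel_right:
  fixes M N P Pi :: "'a::field mat"
  assumes "M \<in> carrier_mat n n" "N \<in> carrier_mat n n" "P \<in> carrier_mat n n" "Pi \<in> carrier_mat n n"
    "P * Pi = 1\<^sub>m n" "M * P = N * P"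
  shows "M = N"
proof -
  have "M = M * (P * Pi)" using assms(1,5) by simp
  also have "\<dots> = (M * P) * Pi" by (rule assoc_mult_mat[OF assms(1,3,4), symmetric])
  also have "\<dots> = (N * P) * Pi" using assms(6) by simp
  also have "\<dots> = N * (P * Pi)" by (rule assoc_mult_mat[OF assms(2,3,4)])
  also have "\<dots> = N" using assms(2,5) by simp
  finally show ?thesis .
qed

lemma conj_inter:
  fixes Q Qi Q' X X' M :: "'a::field mat"
  assumes Q: "Q \<in> carrier_mat n n" "Qi \<in> carrier_mat n n" "Q * Qi = 1\<^sub>m n" "Qi * Q = 1\<^sub>m n"
    and Q': "Q' \<in> carrier_mat n n"
    and X: "X \<in> carrier_mat n n" "X' \<in> carrier_mat n n" and M: "M \<in> carrier_mat n n"
    and XQ: "X * Q = Q * M" and XQ': "X' * Q' = Q' * M"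
  shows "(Q' * Qi) * X = X' * (Q' * Qi)"
proof -
  have QiXc: "Qi * X \<in> carrier_mat n n" using Q X by simp
  have "Qi * X = (Qi * X) * (Q * Qi)" unfolding Q(3) by (rule right_mult_one_mat[OF QiXc, symmetric])
  also have "\<dots> = ((Qi * X) * Q) * Qi" by (rule assoc_mult_mat[OF QiXc Q(1,2), symmetric])
  also have "(Qi * X) * Q = Qi * (X * Q)" by (rule assoc_mult_mat[OF Q(2) X(1) Q(1)])
  also have "\<dots> = Qi * (Q * M)" using XQ by simp
  also have "\<dots> = (Qi * Q) * M" by (rule assoc_mult_mat[OF Q(2,1) M, symmetric])
  also have "\<dots> = M" using Q(4) M by simp
  finally have QiX: "Qi * X = M * Qi" .
  have "(Q' * Qi) * X = Q' * (Qi * X)" by (rule assoc_mult_mat[OF Q' Q(2) X(1)])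
  also have "\<dots> = Q' * (M * Qi)" using QiX by simp
  also have "\<dots> = (Q' * M) * Qi" by (rule assoc_mult_mat[OF Q' M Q(2), symmetric])
  also have "\<dots> = (X' * Q') * Qi" using XQ' by simp
  also have "\<dots> = X' * (Q' * Qi)" by (rule assoc_mult_mat[OF X(2) Q' Q(2)])
  finally show ?thesis .
qed

lemma lowM_cong: "(\<And>j. 1 \<le> j \<Longrightarrow> j < n \<Longrightarrow> f j = g j) \<Longrightarrow> lowM n f = lowM n g"
  unfolding lowM_def by (intro eq_matI) auto

lemma LR_pair_one_zero:
  fixes X Y :: "'a::field mat"
  assumes "LR_pair (Suc 0) X Y"
  shows "X = 0\<^sub>m (Suc 0) (Suc 0)"
proof -
  obtain P Pi where P: "P \<in> carrier_mat (Suc 0) (Suc 0)" "Pi \<in> carrier_mat (Suc 0) (Suc 0)"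
    "P * Pi = 1\<^sub>m (Suc 0)" "Pi * P = 1\<^sub>m (Suc 0)"
    and XP: "X * P = P * lowM (Suc 0) (param_seq (Suc 0) X Y)"
    using LR_pair_normal[OF assms, of 0] by auto
  have X: "X \<in> carrier_mat (Suc 0) (Suc 0)" using assms unfolding LR_pair_def by auto
  have l0: "lowM (Suc 0) (param_seq (Suc 0) X Y) = 0\<^sub>m (Suc 0) (Suc 0)"
    unfolding lowM_def by (intro eq_matI) auto
  have "X * P = 0\<^sub>m (Suc 0) (Suc 0) * P" using XP l0 P by simp
  then show ?thesis using cancel_right[OF X _ P(1,2,3)] by simp
qed

theorem proposition13p41:
  fixes A B C A' B' C' :: "'a::field mat" and d :: nat
  assumes "LR_triple (d + 1) A B C"
    and "LR_triple (d + 1) A' B' C'"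
    and "\<forall>i. 1 \<le> i \<and> i \<le> d \<longrightarrow> param_seq (d + 1) A B i = param_seq (d + 1) A' B' i"
    and "\<forall>i. 1 \<le> i \<and> i \<le> d \<longrightarrow> param_seq (d + 1) B C i = param_seq (d + 1) B' C' i"
    and "\<forall>i. 1 \<le> i \<and> i \<le> d \<longrightarrow> param_seq (d + 1) C A i = param_seq (d + 1) C' A' i"
    and "\<forall>i \<le> d. trace_a (d + 1) A B C i = trace_a (d + 1) A' B' C' i"
    and "\<forall>i \<le> d. trace_a' (d + 1) A B C i = trace_a' (d + 1) A' B' C' i"
    and "\<forall>i \<le> d. trace_a'' (d + 1) A B C i = trace_a'' (d + 1) A' B' C' i"
  shows "LR_triple_iso (d + 1) A B C A' B' C'"
proof -
  define n where "n = Suc d"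
  have nd: "d + 1 = n" unfolding n_def by simp
  have T: "LR_triple n A B C" and T': "LR_triple n A' B' C'" using assms(1,2) nd by simp_all
  have pAB: "param_seq n A' B' i = param_seq n A B i" if "1 \<le> i" "i < n" for i
    using assms(3) that nd n_def by auto
  have pBC: "param_seq n B' C' i = param_seq n B C i" if "1 \<le> i" "i < n" for i
    using assms(4) that nd n_def by auto
  have pCA: "param_seq n C' A' i = param_seq n C A i" if "1 \<le> i" "i < n" for i
    using assms(5) that nd n_def by auto
  have tr: "trace_a n A' B' C' d = trace_a n A B C d" using assms(6) nd by auto
  have carr: "A \<in> carrier_mat n n" "B \<in> carrier_mat n n" "C \<in> carrier_mat n n"
    "A' \<in> carrier_mat n n" "B' \<in> carrier_mat n n" "C' \<in> carrier_mat n n"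
    using T T' unfolding LR_triple_def LR_pair_def by auto
  show ?thesis
  proof (cases "d = 0")
    case True
    then have n1: "n = Suc 0" unfolding n_def by simp
    have "A = 0\<^sub>m (Suc 0) (Suc 0)" "B = 0\<^sub>m (Suc 0) (Suc 0)" "C = 0\<^sub>m (Suc 0) (Suc 0)"
      "A' = 0\<^sub>m (Suc 0) (Suc 0)" "B' = 0\<^sub>m (Suc 0) (Suc 0)" "C' = 0\<^sub>m (Suc 0) (Suc 0)"
      using T T' n1 LR_pair_one_zero unfolding LR_triple_def by blast+
    moreover have "invertible_mat (1\<^sub>m (Suc 0) :: 'a mat)"
      unfolding invertible_mat_def inverts_mat_def by (auto intro!: exI[of _ "1\<^sub>m (Suc 0)"])
    ultimately show ?thesis unfolding LR_triple_iso_def using nd n1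
      by (intro bexI[of _ "1\<^sub>m (Suc 0)"]) auto
  next
    case False
    then have d1: "1 \<le> d" by simp
    obtain Q Qi c P Pi where Q: "Q \<in> carrier_mat n n" "Qi \<in> carrier_mat n n" "Q * Qi = 1\<^sub>m n" "Qi * Q = 1\<^sub>m n"
      and CQ: "C * Q = Q * lowM n (param_seq n C A)" and AQ: "A * Q = Q * raiseM n"
      and p3: "\<forall>j. 1 \<le> j \<and> j < n \<longrightarrow> param_seq n C A j \<noteq> 0"
      and cc: "c \<in> carrier_vec n" and cnz: "c \<noteq> 0\<^sub>v n"
      and rc: "\<forall>m. Suc m < n \<longrightarrow> param_seq n C A (Suc m) * c $ (Suc m) =
        trace_a n A B C d * c $ m + (param_seq n B C 1 / param_seq n A B d) * (if m = 0 then 0 else c $ (m - 1))"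
      and P: "P \<in> carrier_mat n n" "Pi \<in> carrier_mat n n" "P * Pi = 1\<^sub>m n" "Pi * P = 1\<^sub>m n"
      and AP: "A * P = P * lowM n (param_seq n A B)" and BP: "B * P = P * raiseM n"
      and p1: "\<forall>j. 1 \<le> j \<and> j < n \<longrightarrow> param_seq n A B j \<noteq> 0" and Qc: "Q *\<^sub>v c = col P d"
      by (rule triple_data[OF T n_def d1])
    obtain Q' Qi' c' P' Pi' where Q': "Q' \<in> carrier_mat n n" "Qi' \<in> carrier_mat n n" "Q' * Qi' = 1\<^sub>m n" "Qi' * Q' = 1\<^sub>m n"
      and CQ'0: "C' * Q' = Q' * lowM n (param_seq n C' A')" and AQ': "A' * Q' = Q' * raiseM n"
      and p3': "\<forall>j. 1 \<le> j \<and> j < n \<longrightarrow> param_seq n C' A' j \<noteq> 0"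
      and cc': "c' \<in> carrier_vec n" and cnz': "c' \<noteq> 0\<^sub>v n"
      and rc'0: "\<forall>m. Suc m < n \<longrightarrow> param_seq n C' A' (Suc m) * c' $ (Suc m) =
        trace_a n A' B' C' d * c' $ m + (param_seq n B' C' 1 / param_seq n A' B' d) * (if m = 0 then 0 else c' $ (m - 1))"
      and P': "P' \<in> carrier_mat n n" "Pi' \<in> carrier_mat n n" "P' * Pi' = 1\<^sub>m n" "Pi' * P' = 1\<^sub>m n"
      and AP'0: "A' * P' = P' * lowM n (param_seq n A' B')" and BP': "B' * P' = P' * raiseM n"
      and p1': "\<forall>j. 1 \<le> j \<and> j < n \<longrightarrow> param_seq n A' B' j \<noteq> 0"
      and Qc': "Q' *\<^sub>v c' = col P' d"
      by (rule triple_data[OF T' n_def d1])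
    have dn: "d < n" "1 < n" using n_def d1 by auto
    have CQ': "C' * Q' = Q' * lowM n (param_seq n C A)"
      using CQ'0 lowM_cong[of n "param_seq n C' A'" "param_seq n C A"] pCA by simp
    have AP': "A' * P' = P' * lowM n (param_seq n A B)"
      using AP'0 lowM_cong[of n "param_seq n A' B'" "param_seq n A B"] pAB by simp
    have rc': "\<forall>m. Suc m < n \<longrightarrow> param_seq n C A (Suc m) * c' $ (Suc m) =
        trace_a n A B C d * c' $ m + (param_seq n B C 1 / param_seq n A B d) * (if m = 0 then 0 else c' $ (m - 1))"
      using rc'0 pCA pBC[of 1] pAB[of d] tr dn d1 by simp
    define y where "y = yseq (param_seq n C A) (trace_a n A B C d) (param_seq n B C 1 / param_seq n A B d)"
    have cy: "c $ m = c $ 0 * y m" if "m < n" for m unfolding y_def by (rule rec_solve[OF p3 rc that])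
    have cy': "c' $ m = c' $ 0 * y m" if "m < n" for m unfolding y_def by (rule rec_solve[OF p3 rc' that])
    have c0: "c $ 0 \<noteq> 0"
    proof
      assume "c $ 0 = 0"
      then have "c = 0\<^sub>v n" using cy cc by (intro eq_vecI) auto
      then show False using cnz by simp
    qed
    have c0': "c' $ 0 \<noteq> 0"
    proof
      assume "c' $ 0 = 0"
      then have "c' = 0\<^sub>v n" using cy' cc' by (intro eq_vecI) auto
      then show False using cnz' by simp
    qed
    define s where "s = c $ 0 / c' $ 0"
    have snz: "s \<noteq> 0" using c0 c0' by (simp add: s_def)
    have csc: "c = s \<cdot>\<^sub>v c'"
    proof (rule eq_vecI)
      fix i assume "i < dim_vec (s \<cdot>\<^sub>v c')"
      then have i: "i < n" using cc' by simp
      show "c $ i = (s \<cdot>\<^sub>v c') $ i" using cy[OF i] cy'[OF i] i cc' c0' by (simp add: s_def)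
    qed (use cc cc' in simp)
    define S where "S = Q' * Qi"
    have Sc: "S \<in> carrier_mat n n" using Q Q' by (simp add: S_def)
    have SA: "S * A = A' * S" unfolding S_def by (rule conj_inter[OF Q Q'(1) carr(1) carr(4) raiseM_carrier AQ AQ'])
    have SC: "S * C = C' * S" unfolding S_def by (rule conj_inter[OF Q Q'(1) carr(3) carr(6) lowM_carrier CQ CQ'])
    have SAv: "S *\<^sub>v (A *\<^sub>v v) = A' *\<^sub>v (S *\<^sub>v v)" if "v \<in> carrier_vec n" for v
    proof -
      have "S *\<^sub>v (A *\<^sub>v v) = (S * A) *\<^sub>v v" by (rule assoc_mult_mat_vec[OF Sc carr(1) that, symmetric])
      also have "\<dots> = (A' * S) *\<^sub>v v" using SA by simp
      also have "\<dots> = A' *\<^sub>v (S *\<^sub>v v)" by (rule assoc_mult_mat_vec[OF carr(4) Sc that])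
      finally show ?thesis .
    qed
    have Sd: "S *\<^sub>v col P d = s \<cdot>\<^sub>v col P' d"
    proof -
      have "S *\<^sub>v col P d = Q' *\<^sub>v (Qi *\<^sub>v (Q *\<^sub>v c))" using Qc assoc_mult_mat_vec[OF Q'(1) Q(2), of "col P d"] P
        unfolding S_def by auto
      also have "Qi *\<^sub>v (Q *\<^sub>v c) = c" by (rule inv_cancel_vec[OF Q(1,2,4) cc])
      also have "Q' *\<^sub>v c = s \<cdot>\<^sub>v (Q' *\<^sub>v c')" using csc mult_mat_vec[OF Q'(1) cc'] by simp
      finally show ?thesis using Qc' by simp
    qed
    have cPc: "col P j \<in> carrier_vec n" "col P' j \<in> carrier_vec n" for j using P P' by auto
    have Sk: "k \<le> d \<longrightarrow> S *\<^sub>v col P (d - k) = s \<cdot>\<^sub>v col P' (d - k)" for k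
    proof (induction k)
      case 0 then show ?case using Sd by simp
    next
      case (Suc k)
      show ?case
      proof
        assume k: "Suc k \<le> d"
        define j where "j = d - k"
        have j: "1 \<le> j" "j < n" "j - 1 = d - Suc k" using k dn unfolding j_def by auto
        have IH: "S *\<^sub>v col P j = s \<cdot>\<^sub>v col P' j" using Suc k unfolding j_def by simp
        have phij: "param_seq n A B j \<noteq> 0" using p1 j by simp
        have Aj: "A *\<^sub>v col P j = param_seq n A B j \<cdot>\<^sub>v col P (j - 1)" using low_col[OF carr(1) P(1) AP j(2)] j by simp
        have A'j: "A' *\<^sub>v col P' j = param_seq n A B j \<cdot>\<^sub>v col P' (j - 1)" using low_col[OF carr(4) P'(1) AP' j(2)] j by simp
        have "col P (j - 1) = (1 / param_seq n A B j) \<cdot>\<^sub>v (A *\<^sub>v col P j)"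
          using Aj phij by (simp add: smult_smult_assoc)
        then have "S *\<^sub>v col P (j - 1) = (1 / param_seq n A B j) \<cdot>\<^sub>v (S *\<^sub>v (A *\<^sub>v col P j))"
          using mult_mat_vec[OF Sc] carr(1) cPc by simp
        also have "S *\<^sub>v (A *\<^sub>v col P j) = A' *\<^sub>v (s \<cdot>\<^sub>v col P' j)" using SAv[OF cPc(1)] IH by simp
        also have "\<dots> = (s * param_seq n A B j) \<cdot>\<^sub>v col P' (j - 1)"
          using mult_mat_vec[OF carr(4) cPc(2)] A'j by (simp add: smult_smult_assoc)
        finally have "S *\<^sub>v col P (j - 1) = s \<cdot>\<^sub>v col P' (j - 1)" using phij by (simp add: smult_smult_assoc)
        then show "S *\<^sub>v col P (d - Suc k) = s \<cdot>\<^sub>v col P' (d - Suc k)" using j by simp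
      qed
    qed
    have Scol: "S *\<^sub>v col P j = s \<cdot>\<^sub>v col P' j" if "j < n" for j
      using Sk[of "d - j"] that n_def by simp
    have SB: "S * B = B' * S"
    proof (rule cancel_right[OF _ _ P(1,2,3)])
      show "S * B \<in> carrier_mat n n" "B' * S \<in> carrier_mat n n" using Sc carr by simp_all
      show "S * B * P = B' * S * P"
      proof (rule mat_eq_cols[of _ n n])
        show "S * B * P \<in> carrier_mat n n" "B' * S * P \<in> carrier_mat n n" using Sc carr P by simp_all
        fix j assume j: "j < n"
        have "col (S * B * P) j = (S * B) *\<^sub>v col P j" by (rule col_mult2) (use Sc carr P j in auto)
        also have "\<dots> = S *\<^sub>v (B *\<^sub>v col P j)" by (rule assoc_mult_mat_vec[OF Sc carr(2) cPc(1)])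
        also have "B *\<^sub>v col P j = (if Suc j < n then col P (Suc j) else 0\<^sub>v n)"
          by (rule raise_col[OF carr(2) P(1) BP j])
        also have "S *\<^sub>v \<dots> = (if Suc j < n then s \<cdot>\<^sub>v col P' (Suc j) else 0\<^sub>v n)"
          using Scol Sc by auto
        also have "\<dots> = s \<cdot>\<^sub>v (B' *\<^sub>v col P' j)" using raise_col[OF carr(5) P'(1) BP' j] by simp
        also have "\<dots> = B' *\<^sub>v (S *\<^sub>v col P j)" using Scol[OF j] mult_mat_vec[OF carr(5) cPc(2)] by simp
        also have "\<dots> = (B' * S) *\<^sub>v col P j" by (rule assoc_mult_mat_vec[OF carr(5) Sc cPc(1), symmetric])
        also have "\<dots> = col (B' * S * P) j" by (rule col_mult2[symmetric]) (use Sc carr P j in auto)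
        finally show "col (S * B * P) j = col (B' * S * P) j" .
      qed
    qed
    have Sinv: "invertible_mat S"
    proof -
      define T where "T = Q * Qi'"
      have Tc: "T \<in> carrier_mat n n" using Q Q' by (simp add: T_def)
      have ST: "S * T = 1\<^sub>m n"
      proof -
        have "S * T = Q' * (Qi * (Q * Qi'))" unfolding S_def T_def
          by (rule assoc_mult_mat[OF Q'(1) Q(2) mult_carrier_mat[OF Q(1) Q'(2)]])
        also have "Qi * (Q * Qi') = (Qi * Q) * Qi'" by (rule assoc_mult_mat[OF Q(2,1) Q'(2), symmetric])
        also have "\<dots> = Qi'" using Q(4) Q'(2) by simp
        finally show ?thesis using Q'(3) by simp
      qed
      have TS: "T * S = 1\<^sub>m n"
      proof -
        have "T * S = Q * (Qi' * (Q' * Qi))" unfolding S_def T_def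
          by (rule assoc_mult_mat[OF Q(1) Q'(2) mult_carrier_mat[OF Q'(1) Q(2)]])
        also have "Qi' * (Q' * Qi) = (Qi' * Q') * Qi" by (rule assoc_mult_mat[OF Q'(2,1) Q(2), symmetric])
        also have "\<dots> = Qi" using Q'(4) Q(2) by simp
        finally show ?thesis using Q(3) by simp
      qed
      show ?thesis unfolding invertible_mat_def inverts_mat_def using Sc Tc ST TS by auto
    qed
    show ?thesis unfolding LR_triple_iso_def nd using Sc Sinv SA SB SC by blast
  qed
qed

end
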